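(* Let $p$ be a prime, $\omega_1=e^{2\pi i/p}$, $F\in\mathbb Z[x]$, and $H(x)=\prod_{j=0}^{p-1}F(x\omega_1^j)$. Then $H(x)=g(x^p)$ for some $g\in\mathbb Z[x]$ with $g(x)\equiv F(x)\pmod p$, and $N_i(F)=N_{i-1}(g)$ for all $i\geq 2$, and $F(1)N_1(F)=g(1)$. If moreover $p=3$ and $F(x)=f_0(x^3)+xf_1(x^3)+x^2f_2(x^3)$ with $f_0,f_1,f_2\in\mathbb Z[x]$, then $g(x)=f_0(x)^3+xf_1(x)^3+x^2f_2(x)^3-3xf_0(x)f_1(x)f_2(x)$.
   Context: For $k\geq1$, $\omega_k=e^{2\pi i/p^k}$ and $N_k(F)=\prod_{1\leq \ell\leq p^k,\ p\nmid \ell}F(\omega_k^\ell)$. *)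

theory Defs
  imports "HOL-Analysis.Analysis" "HOL-Computational_Algebra.Polynomial"
begin

definition root_omega :: "nat \<Rightarrow> nat \<Rightarrow> complex" where
  "root_omega p k = exp (2 * pi * \<i> / of_nat (p ^ k))"

definition normN :: "nat \<Rightarrow> nat \<Rightarrow> int poly \<Rightarrow> complex" where
  "normN p k F = (\<Prod>l\<in>{l. 1 \<le> l \<and> l \<le> p ^ k \<and> \<not> p dvd l}.
      poly (map_poly of_int F) (root_omega p k ^ l))"

end

theory Submission
  imports Defs "HOL-Number_Theory.Cong"
begin


lemma root_omega_pow:
  shows "root_omega p k ^ m = exp (of_nat m * (2 * pi * \<i> / of_nat (p ^ k)))"
  unfolding root_omega_def by (rule exp_of_nat_mult[symmetric])


lemma root_omega_pow_eq_1:
  assumes "p > 0"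
  shows "root_omega p k ^ m = 1 \<longleftrightarrow> p ^ k dvd m"
proof -
  have e: "of_nat m * (2 * pi * \<i> / of_nat (p ^ k)) = 2 * of_real pi * \<i> * of_nat m / (of_nat (p ^ k) :: complex)"
    by simp
  have "p ^ k \<ge> 1" using assms by simp
  from complex_root_unity_eq_1[OF this, of m] show ?thesis
    unfolding root_omega_pow e .
qed


lemma root_omega_pow_mod:
  assumes "p > 0"
  shows "root_omega p k ^ m = root_omega p k ^ (m mod p ^ k)"
proof -
  have "root_omega p k ^ m = (root_omega p k ^ (p^k)) ^ (m div p^k) * root_omega p k ^ (m mod p ^ k)"
    by (simp flip: power_mult power_add add: mult.commute)
  also have "root_omega p k ^ (p^k) = 1" using assms by (simp add: root_omega_pow_eq_1)
  finally show ?thesis by simp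
qed

lemma root_omega_pow_pow:
  assumes "p > 0"
  shows "root_omega p (a + b) ^ (p ^ a) = root_omega p b"
proof -
  have "(of_nat (p^a) :: complex) * (2 * pi * \<i> / of_nat (p ^ (a+b))) = of_nat (p^a) * (2 * pi * \<i>) / (of_nat (p ^ a) * of_nat (p^b))"
    by (simp only: of_nat_power power_add of_nat_mult times_divide_eq_right)
  also have "\<dots> = 2 * pi * \<i> / (of_nat (p ^ b) :: complex)"
    using assms by (intro mult_divide_mult_cancel_left) simp
  finally have e: "(of_nat (p^a) :: complex) * (2 * pi * \<i> / of_nat (p ^ (a+b))) = 2 * pi * \<i> / (of_nat (p ^ b) :: complex)" .
  have "root_omega p (a + b) ^ (p ^ a) = exp ((of_nat (p^a) :: complex) * (2 * pi * \<i> / of_nat (p ^ (a+b))))"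
    by (rule root_omega_pow)
  also note e
  finally show ?thesis unfolding root_omega_def .
qed


lemma root_omega_pow_p: "p > 0 \<Longrightarrow> root_omega p k ^ (p ^ k) = 1"
  by (simp add: root_omega_pow_eq_1)

lemma sum_omega:
  assumes "p > 0"
  shows "(\<Sum>a<p. root_omega p 1 ^ (a * m)) = (if p dvd m then of_nat p else 0)"
proof (cases "p dvd m")
  case True
  then have "root_omega p 1 ^ m = 1" using assms by (simp add: root_omega_pow_eq_1)
  then have "\<And>a. root_omega p 1 ^ (a * m) = 1" by (simp add: power_mult mult.commute[of _ m])
  then show ?thesis using True by simp
next
  case False
  define z where "z = root_omega p 1 ^ m"
  have z1: "z \<noteq> 1" using False assms by (simp add: root_omega_pow_eq_1 z_def)
  have "z ^ p = (root_omega p 1 ^ p) ^ m" by (simp add: z_def flip: power_mult) (simp add: mult.commute)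
  also have "root_omega p 1 ^ p = 1" using root_omega_pow_p[OF assms, of 1] by simp
  finally have zp: "z ^ p = 1" by simp
  have "(\<Sum>a<p. root_omega p 1 ^ (a * m)) = (\<Sum>a<p. z ^ a)"
    by (simp add: z_def flip: power_mult) (simp add: mult.commute)
  also have "\<dots> = (z ^ p - 1) / (z - 1)" using z1 by (rule geometric_sum)
  also have "\<dots> = 0" using zp by simp
  finally show ?thesis using False by simp
qed



lemma ci_add: "map_poly (of_int :: int \<Rightarrow> 'a::comm_ring_1) (p + q) = map_poly of_int p + map_poly of_int q"
  by (intro poly_eqI) (simp add: coeff_map_poly)

lemma ci_diff: "map_poly (of_int :: int \<Rightarrow> 'a::comm_ring_1) (p - q) = map_poly of_int p - map_poly of_int q"
  by (intro poly_eqI) (simp add: coeff_map_poly)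

lemma ci_smult: "map_poly (of_int :: int \<Rightarrow> 'a::comm_ring_1) (smult c p) = smult (of_int c) (map_poly of_int p)"
  by (intro poly_eqI) (simp add: coeff_map_poly)

lemma ci_mult: "map_poly (of_int :: int \<Rightarrow> 'a::comm_ring_1) (p * q) = map_poly of_int p * map_poly of_int q"
  by (intro poly_eqI) (simp add: coeff_map_poly coeff_mult)

lemma ci_1: "map_poly (of_int :: int \<Rightarrow> 'a::comm_ring_1) 1 = 1"
  by simp

lemma ci_sum: "map_poly (of_int :: int \<Rightarrow> 'a::comm_ring_1) (sum f A) = (\<Sum>x\<in>A. map_poly of_int (f x))"
  by (induction A rule: infinite_finite_induct) (simp_all add: ci_add)

lemma ci_prod: "map_poly (of_int :: int \<Rightarrow> 'a::comm_ring_1) (prod f A) = (\<Prod>x\<in>A. map_poly of_int (f x))"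
  by (induction A rule: infinite_finite_induct) (simp_all add: ci_mult)

lemma ci_power: "map_poly (of_int :: int \<Rightarrow> 'a::comm_ring_1) (p ^ n) = map_poly of_int p ^ n"
  by (induction n) (simp_all add: ci_mult)

lemma ci_monom: "map_poly (of_int :: int \<Rightarrow> 'a::comm_ring_1) (monom c n) = monom (of_int c) n"
  by (simp add: map_poly_monom)

lemma ci_pcompose: "map_poly (of_int :: int \<Rightarrow> 'a::comm_ring_1) (pcompose p q) = pcompose (map_poly of_int p) (map_poly of_int q)"
  by (induction p) (simp_all add: pcompose_pCons ci_add ci_mult map_poly_pCons)

lemma poly_ci_of_int: "poly (map_poly (of_int :: int \<Rightarrow> 'a::comm_ring_1) Q) (of_int x) = of_int (poly Q x)"
  by (induction Q) (simp_all add: map_poly_pCons)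

lemma poly_sum_bound:
  assumes "degree P \<le> n"
  shows "poly P (x::'a::comm_semiring_1) = (\<Sum>i\<le>n. coeff P i * x ^ i)"
proof -
  have "poly P x = (\<Sum>i\<le>degree P. coeff P i * x ^ i)" by (rule poly_altdef)
  also have "\<dots> = (\<Sum>i\<le>n. coeff P i * x ^ i)"
    using assms by (intro sum.mono_neutral_left) (auto simp: coeff_eq_0)
  finally show ?thesis .
qed

lemma poly_ci_sum:
  "poly (map_poly (of_int :: int \<Rightarrow> 'a::comm_ring_1) Q) z = (\<Sum>i\<le>degree Q. of_int (coeff Q i) * z ^ i)"
  by (subst poly_sum_bound[OF map_poly_degree_leq]) (simp add: coeff_map_poly)

lemma coeff_pcompose_monom_gen:
  assumes "k > 0"
  shows "coeff (pcompose G (monom (1::'a::comm_semiring_1) k)) m = (if k dvd m then coeff G (m div k) else 0)"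
  using assms
proof (induction G arbitrary: m)
  case 0
  then show ?case by simp
next
  case (pCons a G)
  have c: "coeff (pcompose (pCons a G) (monom 1 k)) m =
      (if m = 0 then a else 0) + (if k \<le> m then coeff (pcompose G (monom 1 k)) (m - k) else 0)"
    by (simp add: pcompose_pCons coeff_monom_mult coeff_pCons split: nat.split)
  show ?case
  proof (cases "m = 0")
    case True
    then show ?thesis using pCons.prems by (simp add: c)
  next
    case False
    show ?thesis
    proof (cases "k \<le> m")
      case False
      then have "\<not> k dvd m" using \<open>m \<noteq> 0\<close> by (auto dest: dvd_imp_le)
      then show ?thesis using False \<open>m \<noteq> 0\<close> by (simp add: c)
    next
      case True
      have d: "k dvd (m - k) \<longleftrightarrow> k dvd m" using True by (simp add: dvd_minus_self)
      have e: "m div k = Suc ((m - k) div k)" using True pCons.prems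
        by (metis Suc_eq_plus1 add.commute div_add_self2 le_add_diff_inverse2 less_not_refl2)
      show ?thesis using True \<open>m \<noteq> 0\<close> pCons.IH[OF pCons.prems, of "m - k"] by (simp add: c d e coeff_pCons)
    qed
  qed
qed



lemma K_lemma:
  fixes Q :: "int poly" and q :: complex
  assumes p: "prime p"
    and inv: "\<forall>a\<in>{1..<p}. poly (map_poly of_int Q) (root_omega p 1 ^ a) = q"
  shows "\<exists>k::int. q = of_int k \<and> k mod int p = poly Q 1 mod int p"
proof -
  define w where "w = root_omega p 1"
  have p0: "p > 0" "p > 1" using prime_gt_1_nat[OF p] by auto
  define S where "S = (\<Sum>i\<le>degree Q. (if p dvd (i + (p - 1)) then coeff Q i else 0))"
  define X where "X = (\<Sum>a<p. w ^ (a * (p - 1)) * poly (map_poly of_int Q) (w ^ a))"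
  have "X = (\<Sum>a<p. \<Sum>i\<le>degree Q. of_int (coeff Q i) * w ^ (a * (i + (p - 1))))"
  proof -
    have e: "w ^ (a * (i + (p - 1))) = w ^ (a * (p - 1)) * (w ^ a) ^ i" for a i
      by (simp only: distrib_left power_add power_mult[symmetric] mult.commute[of i a] mult.commute)
    show ?thesis unfolding X_def poly_ci_sum e
      by (simp add: sum_distrib_left mult_ac)
  qed
  also have "\<dots> = (\<Sum>i\<le>degree Q. of_int (coeff Q i) * (\<Sum>a<p. w ^ (a * (i + (p - 1)))))"
    by (subst sum.swap) (simp add: sum_distrib_left)
  also have "\<dots> = (\<Sum>i\<le>degree Q. of_int (coeff Q i) * (if p dvd (i + (p - 1)) then of_nat p else 0))"
    unfolding w_def by (simp only: sum_omega[OF p0(1)])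
  also have "\<dots> = of_nat p * of_int S"
    unfolding S_def by (simp add: sum_distrib_left of_int_sum if_distrib mult_ac cong: if_cong)
  finally have X1: "X = of_nat p * of_int S" .
  have set: "{..<p} = insert 0 {1..<p}" using p0 by auto
  have "X = poly (map_poly of_int Q) 1 + (\<Sum>a\<in>{1..<p}. w ^ (a * (p - 1)) * q)"
    unfolding X_def set using inv by (simp add: w_def)
  also have "poly (map_poly of_int Q) 1 = (of_int (poly Q 1) :: complex)"
    using poly_ci_of_int[of Q 1, where 'a=complex] by simp
  also have "(\<Sum>a\<in>{1..<p}. w ^ (a * (p - 1)) * q) = ((\<Sum>a<p. w ^ (a * (p - 1))) - 1) * q"
    unfolding set by (simp add: sum_distrib_right)
  also have "(\<Sum>a<p. w ^ (a * (p - 1))) = 0"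
  proof -
    have "\<not> p dvd (p - 1)" using p0 by (auto dest: dvd_imp_le)
    then show ?thesis unfolding w_def using sum_omega[OF p0(1), of "p - 1"] by simp
  qed
  finally have "X = of_int (poly Q 1) - q" by simp
  with X1 have "of_int (poly Q 1) - q = of_nat p * of_int S" by simp
  then have "q = of_int (poly Q 1) - of_nat p * of_int S" by (simp add: algebra_simps)
  then have "q = of_int (poly Q 1 - int p * S)" by simp
  moreover have "(poly Q 1 - int p * S) mod int p = poly Q 1 mod int p"
    by (metis mod_mult_self1 mult.commute diff_conv_add_uminus mult_minus_left)
  ultimately show ?thesis by blast
qed



lemma coeff_prod_class:
  fixes F :: "int poly"
  shows "\<exists>Q::int poly. \<forall>z::complex. coeff (\<Prod>j<k. pcompose (map_poly of_int F) [:0, z^j:]) n = poly (map_poly of_int Q) z"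
proof (induction k arbitrary: n)
  case 0
  show ?case by (intro exI[of _ "[:if n = 0 then 1 else 0:]"]) (simp add: map_poly_pCons)
next
  case (Suc k)
  from Suc.IH obtain Qf where Qf: "\<And>i z. coeff (\<Prod>j<k. pcompose (map_poly of_int F) [:0, (z::complex)^j:]) i = poly (map_poly of_int (Qf i)) z"
    by metis
  define Q where "Q = (\<Sum>i\<le>n. Qf i * monom (coeff F (n - i)) (k * (n - i)))"
  have "coeff (\<Prod>j<Suc k. pcompose (map_poly of_int F) [:0, z^j:]) n = poly (map_poly of_int Q) z" for z :: complex
  proof -
    have "coeff (\<Prod>j<Suc k. pcompose (map_poly of_int F) [:0, z^j:]) n =
        (\<Sum>i\<le>n. coeff (\<Prod>j<k. pcompose (map_poly of_int F) [:0, z^j:]) i * coeff (pcompose (map_poly of_int F) [:0, z^k:]) (n - i))"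
      by (simp add: coeff_mult)
    also have "\<dots> = (\<Sum>i\<le>n. poly (map_poly of_int (Qf i)) z * (of_int (coeff F (n - i)) * z ^ (k * (n - i))))"
      by (intro sum.cong refl) (simp add: Qf coeff_pcompose_linear coeff_map_poly power_mult mult_ac)
    also have "\<dots> = poly (map_poly of_int Q) z"
      unfolding Q_def by (simp add: ci_sum ci_mult ci_monom poly_sum poly_monom)
    finally show ?thesis .
  qed
  then show ?case by blast
qed

lemma prod_omega_reindex:
  fixes T :: "complex \<Rightarrow> 'b::comm_monoid_mult"
  assumes p0: "p > 0" and h: "\<And>j. j < p \<Longrightarrow> h j < p" and inj: "inj_on h {..<p}"
    and f: "\<And>j. j < p \<Longrightarrow> root_omega p 1 ^ f j = root_omega p 1 ^ h j"
  shows "(\<Prod>j<p. T (root_omega p 1 ^ f j)) = (\<Prod>j<p. T (root_omega p 1 ^ j))"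
proof -
  have im: "h ` {..<p} = {..<p}"
    using h inj by (intro endo_inj_surj) auto
  have "(\<Prod>j<p. T (root_omega p 1 ^ f j)) = (\<Prod>j<p. T (root_omega p 1 ^ h j))"
    using f by (intro prod.cong) auto
  also have "\<dots> = (\<Prod>j\<in>h ` {..<p}. T (root_omega p 1 ^ j))"
    using inj by (simp add: prod.reindex)
  also have "\<dots> = (\<Prod>j<p. T (root_omega p 1 ^ j))" using im by simp
  finally show ?thesis .
qed

lemma prod_omega_galois:
  fixes T :: "complex \<Rightarrow> 'b::comm_monoid_mult"
  assumes p: "prime p" and a: "a \<in> {1..<p}"
  shows "(\<Prod>j<p. T ((root_omega p 1 ^ a) ^ j)) = (\<Prod>j<p. T (root_omega p 1 ^ j))"
proof -
  have p0: "p > 0" using prime_gt_0_nat[OF p] .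
  have cop: "coprime a p"
  proof -
    have "\<not> p dvd a" using a by (auto dest: dvd_imp_le)
    then have "coprime p a" using p by (intro prime_imp_coprime)
    then show ?thesis by (simp add: coprime_commute)
  qed
  have "(\<Prod>j<p. T ((root_omega p 1 ^ a) ^ j)) = (\<Prod>j<p. T (root_omega p 1 ^ (a * j)))"
    by (simp add: power_mult)
  also have "\<dots> = (\<Prod>j<p. T (root_omega p 1 ^ j))"
  proof (rule prod_omega_reindex[OF p0, of "\<lambda>j. (a * j) mod p"])
    show "inj_on (\<lambda>j. a * j mod p) {..<p}"
    proof (rule inj_onI)
      fix x y assume xy: "x \<in> {..<p}" "y \<in> {..<p}" "a * x mod p = a * y mod p"
      then have "[a * x = a * y] (mod p)" by (simp add: cong_def)
      then have "[x = y] (mod p)" using cop by (simp add: cong_mult_lcancel_nat)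
      then show "x = y" using xy by (simp add: cong_def)
    qed
  next
    fix j show "root_omega p 1 ^ (a * j) = root_omega p 1 ^ (a * j mod p)"
      using root_omega_pow_mod[OF p0, of 1 "a * j"] by simp
  qed (use p0 in auto)
  finally show ?thesis .
qed



lemma binom_prime:
  fixes x y :: "'a::comm_ring_1"
  assumes p: "prime p"
  shows "\<exists>D. (x + y) ^ p = x ^ p + y ^ p + of_nat p * D"
proof -
  have p1: "p > 1" using prime_gt_1_nat[OF p] .
  define D where "D = (\<Sum>k\<in>{1..<p}. of_nat ((p choose k) div p) * x ^ k * y ^ (p - k))"
  have set: "{..p} = insert 0 (insert p {1..<p})" using p1 by auto
  have "(x + y) ^ p = (\<Sum>k\<le>p. of_nat (p choose k) * x ^ k * y ^ (p - k))"
    by (rule binomial_ring)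
  also have "\<dots> = y ^ p + (x ^ p + (\<Sum>k\<in>{1..<p}. of_nat (p choose k) * x ^ k * y ^ (p - k)))"
    unfolding set using p1 by simp
  also have "(\<Sum>k\<in>{1..<p}. of_nat (p choose k) * x ^ k * y ^ (p - k)) = of_nat p * D"
    unfolding D_def sum_distrib_left
  proof (intro sum.cong refl)
    fix k assume k: "k \<in> {1..<p}"
    have "p dvd (p choose k)" using k p p1 by (intro dvd_choose_prime) auto
    then have "p choose k = p * ((p choose k) div p)" by simp
    then have "(of_nat (p choose k) :: 'a) = of_nat p * of_nat ((p choose k) div p)"
      by (metis of_nat_mult)
    then show "of_nat (p choose k) * x ^ k * y ^ (p - k) = of_nat p * (of_nat ((p choose k) div p) * x ^ k * y ^ (p - k))"
      by (simp add: mult_ac)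
  qed
  finally show ?thesis by (intro exI[of _ D]) (simp add: algebra_simps)
qed

lemma fermat_nat_int:
  assumes p: "prime p"
  shows "(int n) ^ p mod int p = int n mod int p"
proof (induction n)
  case 0
  then show ?case using prime_gt_0_nat[OF p] by (simp add: power_0_left)
next
  case (Suc n)
  obtain D where D: "(int n + 1) ^ p = int n ^ p + 1 ^ p + of_nat p * D"
    using binom_prime[OF p, of "int n" 1] by blast
  have "int (Suc n) ^ p = (int n ^ p + 1) + int p * D" using D by (simp add: algebra_simps)
  then have "(int (Suc n)) ^ p mod int p = (int n ^ p + 1) mod int p"
    by simp
  also have "\<dots> = (int n ^ p mod int p + 1) mod int p" by (simp add: mod_add_left_eq)
  also have "\<dots> = (int n + 1) mod int p" using Suc.IH by (simp add: mod_add_left_eq)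
  finally show ?case by (simp add: add.commute)
qed

lemma fermat_int:
  fixes a :: int
  assumes p: "prime p"
  shows "a ^ p mod int p = a mod int p"
proof -
  have p0: "int p > 0" using prime_gt_0_nat[OF p] by simp
  define n where "n = nat (a mod int p)"
  have n: "int n = a mod int p" using p0 by (simp add: n_def)
  have "a ^ p mod int p = (a mod int p) ^ p mod int p" by (simp add: power_mod)
  also have "\<dots> = int n mod int p" using fermat_nat_int[OF p, of n] n by simp
  also have "\<dots> = a mod int p" using n by simp
  finally show ?thesis .
qed

lemma frobenius_poly:
  fixes F :: "int poly"
  assumes p: "prime p"
  shows "\<exists>C. F ^ p = pcompose F (monom 1 p) + smult (int p) C"
proof (induction F)
  case 0
  then show ?case using prime_gt_0_nat[OF p] by (intro exI[of _ 0]) simp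
next
  case (pCons a F)
  from pCons.IH obtain C where C: "F ^ p = pcompose F (monom 1 p) + smult (int p) C" by blast
  have e: "pCons a F = [:a:] + monom 1 1 * F"
    by (intro poly_eqI) (simp add: coeff_pCons coeff_monom_mult split: nat.split)
  obtain D where D: "([:a:] + monom 1 1 * F) ^ p = [:a:] ^ p + (monom 1 1 * F) ^ p + of_nat p * D"
    using binom_prime[OF p] by blast
  obtain t where t: "a ^ p = a + int p * t"
    using fermat_int[OF p, of a] by (metis mod_eqE mult.commute)
  have c1: "[:a:] ^ p = [:a:] + smult (int p) [:t:]"
    using t by (simp add: poly_const_pow)
  have c2: "(monom 1 1 * F) ^ p = monom 1 p * pcompose F (monom 1 p) + smult (int p) (monom 1 p * C)"
    by (simp add: power_mult_distrib C monom_power distrib_left)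
  have pc: "pcompose (pCons a F) (monom 1 p) = [:a:] + monom 1 p * pcompose F (monom 1 p)"
    by (simp add: pcompose_pCons)
  have "pCons a F ^ p = [:a:] + smult (int p) [:t:] + (monom 1 p * pcompose F (monom 1 p) + smult (int p) (monom 1 p * C)) + smult (int p) D"
    unfolding e D c1 c2 of_nat_mult_conv_smult by simp
  also have "\<dots> = pcompose (pCons a F) (monom 1 p) + smult (int p) ([:t:] + monom 1 p * C + D)"
    by (simp only: pc smult_add_right add_ac)
  finally show ?case by blast
qed



lemma H_vanish:
  fixes F :: "int poly"
  assumes p: "prime p" and nd: "\<not> p dvd n"
  shows "coeff (\<Prod>j<p. pcompose (map_poly of_int F) [:0, root_omega p 1 ^ j:]) n = 0"
proof -
  define w where "w = root_omega p 1"
  define H where "H = (\<Prod>j<p. pcompose (map_poly of_int F) [:0, w ^ j:])"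
  have p0: "p > 0" using prime_gt_0_nat[OF p] .
  have lin: "pcompose [:0, c:] [:0, d:] = [:0, c * d:]" for c d :: complex
    by (simp add: pcompose_pCons)
  have "pcompose H [:0, w:] = (\<Prod>j<p. pcompose (map_poly of_int F) [:0, w ^ Suc j:])"
    unfolding H_def pcompose_prod by (simp add: lin mult.commute flip: pcompose_assoc)
  also have "\<dots> = H"
    unfolding H_def w_def
  proof (rule prod_omega_reindex[OF p0, of "\<lambda>j. Suc j mod p", where T = "\<lambda>c. pcompose (map_poly of_int F) [:0, c:]"])
    show "inj_on (\<lambda>j. Suc j mod p) {..<p}"
    proof (rule inj_onI)
      fix x y assume xy: "x \<in> {..<p}" "y \<in> {..<p}" "Suc x mod p = Suc y mod p"
      then have "[x + 1 = y + 1] (mod p)" by (simp add: cong_def)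
      then have "[x = y] (mod p)" by (metis cong_add_rcancel_nat)
      then show "x = y" using xy by (simp add: cong_def)
    qed
  next
    fix j show "root_omega p 1 ^ Suc j = root_omega p 1 ^ (Suc j mod p)"
      using root_omega_pow_mod[OF p0, of 1 "Suc j"] by simp
  qed (use p0 in auto)
  finally have "pcompose H [:0, w:] = H" .
  then have "w ^ n * coeff H n = coeff H n"
    by (metis coeff_pcompose_linear)
  moreover have "w ^ n \<noteq> 1" using nd p0 by (simp add: w_def root_omega_pow_eq_1)
  ultimately have "coeff H n = 0"
    by (metis mult_cancel_right1)
  then show ?thesis by (simp add: H_def w_def)
qed

lemma H_integral:
  fixes F :: "int poly"
  assumes p: "prime p"
  shows "\<exists>k::int. coeff (\<Prod>j<p. pcompose (map_poly of_int F) [:0, root_omega p 1 ^ j:]) n = of_int k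
           \<and> k mod int p = coeff (F ^ p) n mod int p"
proof -
  define w where "w = root_omega p 1"
  obtain Q where Q: "\<And>z::complex. coeff (\<Prod>j<p. pcompose (map_poly of_int F) [:0, z^j:]) n = poly (map_poly of_int Q) z"
    using coeff_prod_class[where k=p and F=F and n=n] by blast
  have inv: "\<forall>a\<in>{1..<p}. poly (map_poly of_int Q) (w ^ a) = coeff (\<Prod>j<p. pcompose (map_poly of_int F) [:0, w^j:]) n"
  proof
    fix a assume a: "a \<in> {1..<p}"
    have "poly (map_poly of_int Q) (w ^ a) = coeff (\<Prod>j<p. pcompose (map_poly of_int F) [:0, (w ^ a)^j:]) n"
      by (simp add: Q)
    also have "(\<Prod>j<p. pcompose (map_poly of_int F) [:0, (w ^ a)^j:]) = (\<Prod>j<p. pcompose (map_poly of_int F) [:0, w^j:])"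
      unfolding w_def by (rule prod_omega_galois[OF p a, where T = "\<lambda>c. pcompose (map_poly of_int F) [:0, c:]"])
    finally show "poly (map_poly of_int Q) (w ^ a) = coeff (\<Prod>j<p. pcompose (map_poly of_int F) [:0, w^j:]) n" .
  qed
  obtain k where k: "coeff (\<Prod>j<p. pcompose (map_poly of_int F) [:0, w^j:]) n = of_int k"
      "k mod int p = poly Q 1 mod int p"
    using K_lemma[OF p inv[unfolded w_def]] unfolding w_def by blast
  have "(of_int (poly Q 1) :: complex) = poly (map_poly of_int Q) 1"
    using poly_ci_of_int[of Q 1, where 'a=complex] by simp
  also have "\<dots> = coeff (\<Prod>j<p. pcompose (map_poly of_int F) [:0, (1::complex)^j:]) n"
    by (rule Q[symmetric])
  also have "\<dots> = coeff ((map_poly of_int F) ^ p) n" by simp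
  also have "\<dots> = of_int (coeff (F ^ p) n)" by (simp add: ci_power[symmetric] coeff_map_poly)
  finally have "poly Q 1 = coeff (F ^ p) n" by (simp only: of_int_eq_iff)
  then show ?thesis using k unfolding w_def by auto
qed



lemma exists_g:
  fixes F :: "int poly"
  assumes p: "prime p"
    and H_def: "H = (\<Prod>j<p. pcompose (map_poly of_int F) [:0, root_omega p 1 ^ j:])"
  shows "\<exists>g :: int poly. H = pcompose (map_poly of_int g) (monom 1 p)
           \<and> (\<forall>n. coeff g n mod int p = coeff F n mod int p)"
proof -
  have p0: "p > 0" using prime_gt_0_nat[OF p] .
  define g where "g = Abs_poly (\<lambda>n. \<lfloor>Re (coeff H (p * n))\<rfloor>)"
  have cg: "coeff g = (\<lambda>n. \<lfloor>Re (coeff H (p * n))\<rfloor>)"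
    unfolding g_def
  proof (rule coeff_Abs_poly[of "degree H"])
    fix i assume "i > degree H"
    moreover have "i \<le> p * i" using p0 by simp
    ultimately have "p * i > degree H" by linarith
    then show "\<lfloor>Re (coeff H (p * i))\<rfloor> = 0" by (simp add: coeff_eq_0)
  qed
  have gi: "of_int (coeff g n) = coeff H (p * n) \<and> coeff g n mod int p = coeff (F ^ p) (p * n) mod int p" for n
  proof -
    obtain k where k: "coeff H (p * n) = of_int k" "k mod int p = coeff (F ^ p) (p * n) mod int p"
      using H_integral[OF p, of F "p * n"] unfolding H_def[symmetric] by blast
    then have "coeff g n = k" by (simp add: cg)
    then show ?thesis using k by simp
  qed
  have Heq: "H = pcompose (map_poly of_int g) (monom 1 p)"
  proof (rule poly_eqI)
    fix m
    show "coeff H m = coeff (pcompose (map_poly of_int g) (monom 1 p)) m"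
    proof (cases "p dvd m")
      case True
      then obtain n where n: "m = p * n" by blast
      show ?thesis using p0 gi[of n] by (simp add: n coeff_pcompose_monom_gen coeff_map_poly)
    next
      case False
      then show ?thesis using p0 H_vanish[OF p False, of F]
        by (simp add: H_def coeff_pcompose_monom_gen)
    qed
  qed
  have gm: "coeff g n mod int p = coeff F n mod int p" for n
  proof -
    obtain C where C: "F ^ p = pcompose F (monom 1 p) + smult (int p) C"
      using frobenius_poly[OF p] by blast
    have "coeff (F ^ p) (p * n) = coeff F n + int p * coeff C (p * n)"
      using p0 by (simp add: C coeff_pcompose_monom_gen)
    then show ?thesis using gi[of n] by simp
  qed
  show ?thesis using Heq gm by blast
qed

lemma pcompose_monom_inj:
  fixes g1 g2 :: "int poly"
  assumes p0: "p > 0"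
    and eq: "pcompose (map_poly (of_int :: int \<Rightarrow> complex) g1) (monom 1 p) = pcompose (map_poly of_int g2) (monom 1 p)"
  shows "g1 = g2"
proof (rule poly_eqI)
  fix n
  have "coeff (pcompose (map_poly (of_int :: int \<Rightarrow> complex) g1) (monom 1 p)) (p * n) =
        coeff (pcompose (map_poly (of_int :: int \<Rightarrow> complex) g2) (monom 1 p)) (p * n)"
    using eq by simp
  then have "(of_int (coeff g1 n) :: complex) = of_int (coeff g2 n)"
    using p0 by (simp add: coeff_pcompose_monom_gen coeff_map_poly)
  then show "coeff g1 n = coeff g2 n" by simp
qed



lemma bij_S:
  fixes p q :: nat
  assumes p0: "p > 0" and q0: "q > 0" and pq: "p dvd q"
  shows "bij_betw (\<lambda>(l, j). l + j * q) ({l. 1 \<le> l \<and> l \<le> q \<and> \<not> p dvd l} \<times> {..<p})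
           {m. 1 \<le> m \<and> m \<le> q * p \<and> \<not> p dvd m}"
proof (rule bij_betw_byWitness[where f' = "\<lambda>m. ((m - 1) mod q + 1, (m - 1) div q)"])
  show "\<forall>a\<in>{l. 1 \<le> l \<and> l \<le> q \<and> \<not> p dvd l} \<times> {..<p}.
          (\<lambda>m. ((m - 1) mod q + 1, (m - 1) div q)) ((\<lambda>(l, j). l + j * q) a) = a"
  proof -
    have h: "((l + j * q - 1) mod q + 1, (l + j * q - 1) div q) = (l, j)" if l: "1 \<le> l" "l \<le> q" for l j
    proof -
    have e: "l + j * q - 1 = (l - 1) + j * q" using l by simp
    have lq: "l - 1 < q" using l by simp
    have m1: "(l + j * q - 1) mod q = l - 1" unfolding e using lq by simp
    have m2: "(l + j * q - 1) div q = j" unfolding e using lq q0 by simp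
    show "((l + j * q - 1) mod q + 1, (l + j * q - 1) div q) = (l, j)"
      using m1 m2 l by simp
    qed
    then show ?thesis by auto
  qed
  show "\<forall>a'\<in>{m. 1 \<le> m \<and> m \<le> q * p \<and> \<not> p dvd m}.
          (\<lambda>(l, j). l + j * q) ((\<lambda>m. ((m - 1) mod q + 1, (m - 1) div q)) a') = a'"
  proof -
    have "(m - 1) mod q + 1 + (m - 1) div q * q = m" if m: "1 \<le> m" for m
    proof -
      have "(m - 1) mod q + (m - 1) div q * q = m - 1" by (rule mod_div_mult_eq)
      then show ?thesis using m by simp
    qed
    then show ?thesis by auto
  qed
  show "(\<lambda>(l, j). l + j * q) ` ({l. 1 \<le> l \<and> l \<le> q \<and> \<not> p dvd l} \<times> {..<p})
          \<subseteq> {m. 1 \<le> m \<and> m \<le> q * p \<and> \<not> p dvd m}"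
  proof -
    have "1 \<le> l + j * q \<and> l + j * q \<le> q * p \<and> \<not> p dvd (l + j * q)"
      if l: "1 \<le> l" "l \<le> q" "\<not> p dvd l" and j: "j < p" for l j
    proof -
    have "(j + 1) * q \<le> p * q" using j by (intro mult_le_mono1) simp
    then have "l + j * q \<le> q * p" using l by (simp add: algebra_simps)
    moreover have "\<not> p dvd (l + j * q)"
    proof
      assume "p dvd (l + j * q)"
      moreover have "p dvd j * q" using pq by simp
      ultimately have "p dvd l" by (simp add: dvd_add_left_iff)
      with l show False by simp
    qed
    ultimately show ?thesis using l by simp
    qed
    then show ?thesis by auto
  qed
  show "(\<lambda>m. ((m - 1) mod q + 1, (m - 1) div q)) ` {m. 1 \<le> m \<and> m \<le> q * p \<and> \<not> p dvd m}
          \<subseteq> {l. 1 \<le> l \<and> l \<le> q \<and> \<not> p dvd l} \<times> {..<p}"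
  proof -
    have "(m - 1) mod q + 1 \<in> {l. 1 \<le> l \<and> l \<le> q \<and> \<not> p dvd l} \<and> (m - 1) div q \<in> {..<p}"
      if m: "1 \<le> m" "m \<le> q * p" "\<not> p dvd m" for m
    proof -
    have a: "(m - 1) mod q < q" using q0 by simp
    have b: "(m - 1) div q < p" using m q0 by (intro less_mult_imp_div_less) (simp add: mult.commute)
    have c: "\<not> p dvd ((m - 1) mod q + 1)"
    proof
      assume h: "p dvd ((m - 1) mod q + 1)"
      have "(m - 1) mod q + 1 + (m - 1) div q * q = m" using m by (simp add: mod_div_mult_eq)
      moreover have "p dvd (m - 1) div q * q" using pq by simp
      ultimately have "p dvd m" using h by (metis dvd_add)
      with m show False by simp
    qed
    show ?thesis using a b c by simp
    qed
    then show ?thesis by auto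
  qed
qed



lemma norm_rel:
  fixes F g :: "int poly"
  assumes p: "prime p" and i: "i \<ge> 2"
    and Heq: "(\<Prod>j<p. pcompose (map_poly of_int F) [:0, root_omega p 1 ^ j:]) = pcompose (map_poly of_int g) (monom 1 p)"
  shows "normN p i F = normN p (i - 1) g"
proof -
  have p0: "p > 0" using prime_gt_0_nat[OF p] .
  define q where "q = p ^ (i - 1)"
  have q0: "q > 0" using p0 by (simp add: q_def)
  have pq: "p dvd q" using i by (simp add: q_def)
  have piq: "p ^ i = q * p" using i unfolding q_def by (metis power_minus_mult not_numeral_le_zero neq0_conv)
  define wi where "wi = root_omega p i"
  have w1: "wi ^ q = root_omega p 1"
    using root_omega_pow_pow[OF p0, of "i - 1" 1] i by (simp add: wi_def q_def)
  have wp: "wi ^ p = root_omega p (i - 1)"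
    using root_omega_pow_pow[OF p0, of 1 "i - 1"] i by (simp add: wi_def)
  define Fw where "Fw = (\<lambda>m. poly (map_poly (of_int :: int \<Rightarrow> complex) F) (wi ^ m))"
  have inner: "poly (map_poly of_int g) (root_omega p (i - 1) ^ l) = (\<Prod>j<p. Fw (l + j * q))" for l
  proof -
    have "root_omega p (i - 1) ^ l = (wi ^ l) ^ p"
      unfolding wp[symmetric] by (simp flip: power_mult add: mult.commute)
    then have "poly (map_poly of_int g) (root_omega p (i - 1) ^ l) = poly (pcompose (map_poly of_int g) (monom 1 p)) (wi ^ l)"
      by (simp add: poly_pcompose poly_monom)
    also have "\<dots> = poly (\<Prod>j<p. pcompose (map_poly of_int F) [:0, root_omega p 1 ^ j:]) (wi ^ l)"
      by (simp only: Heq)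
    also have "\<dots> = (\<Prod>j<p. poly (map_poly of_int F) (root_omega p 1 ^ j * wi ^ l))"
      by (simp add: poly_prod poly_pcompose mult.commute)
    also have "\<dots> = (\<Prod>j<p. Fw (l + j * q))"
    proof (intro prod.cong refl)
      fix j
      have "root_omega p 1 ^ j * wi ^ l = wi ^ (l + j * q)"
        unfolding w1[symmetric] by (simp add: power_add flip: power_mult) (simp add: mult.commute)
      then show "poly (map_poly of_int F) (root_omega p 1 ^ j * wi ^ l) = Fw (l + j * q)"
        by (simp add: Fw_def)
    qed
    finally show ?thesis .
  qed
  have "normN p (i - 1) g = (\<Prod>l\<in>{l. 1 \<le> l \<and> l \<le> q \<and> \<not> p dvd l}. \<Prod>j<p. Fw (l + j * q))"
    unfolding normN_def q_def[symmetric] by (simp only: inner)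
  also have "\<dots> = (\<Prod>(l, j)\<in>{l. 1 \<le> l \<and> l \<le> q \<and> \<not> p dvd l} \<times> {..<p}. Fw (l + j * q))"
    by (rule prod.cartesian_product)
  also have "\<dots> = (\<Prod>m\<in>{m. 1 \<le> m \<and> m \<le> q * p \<and> \<not> p dvd m}. Fw m)"
    using prod.reindex_bij_betw[OF bij_S[OF p0 q0 pq], of Fw]
    by (simp add: case_prod_beta' split_def)
  also have "\<dots> = normN p i F"
    unfolding normN_def piq Fw_def wi_def ..
  finally show ?thesis ..
qed



lemma norm1:
  fixes F g :: "int poly"
  assumes p: "prime p"
    and Heq: "(\<Prod>j<p. pcompose (map_poly of_int F) [:0, root_omega p 1 ^ j:]) = pcompose (map_poly of_int g) (monom 1 p)"
  shows "of_int (poly F 1) * normN p 1 F = of_int (poly g 1)"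
proof -
  have p1: "p > 1" using prime_gt_1_nat[OF p] .
  have set: "{..<p} = insert 0 {1..<p}" using p1 by auto
  have set2: "{l. 1 \<le> l \<and> l \<le> p ^ 1 \<and> \<not> p dvd l} = {1..<p}"
    using p1 by (auto simp: le_less dest: dvd_imp_le)
  have "(of_int (poly g 1) :: complex) = poly (map_poly of_int g) (1 ^ p)"
    using poly_ci_of_int[of g 1, where 'a=complex] by simp
  also have "\<dots> = poly (pcompose (map_poly of_int g) (monom 1 p)) 1"
    by (simp add: poly_pcompose poly_monom)
  also have "\<dots> = poly (\<Prod>j<p. pcompose (map_poly of_int F) [:0, root_omega p 1 ^ j:]) 1"
    by (simp only: Heq)
  also have "\<dots> = (\<Prod>j<p. poly (map_poly of_int F) (root_omega p 1 ^ j))"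
    by (simp add: poly_prod poly_pcompose)
  also have "\<dots> = poly (map_poly of_int F) 1 * (\<Prod>j\<in>{1..<p}. poly (map_poly of_int F) (root_omega p 1 ^ j))"
    unfolding set by simp
  also have "poly (map_poly of_int F) 1 = (of_int (poly F 1) :: complex)"
    using poly_ci_of_int[of F 1, where 'a=complex] by simp
  also have "(\<Prod>j\<in>{1..<p}. poly (map_poly of_int F) (root_omega p 1 ^ j)) = normN p 1 F"
    unfolding normN_def set2 ..
  finally show ?thesis ..
qed

lemma pcompose_monom1: "pcompose (monom (1::'a::comm_ring_1) n) r = r ^ n"
  by (induction n) (simp_all add: monom_Suc pcompose_pCons monom_0 pcompose_1)

lemma pcompose_power: "pcompose ((P::'a::comm_ring_1 poly) ^ n) r = (pcompose P r) ^ n"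
  by (induction n) (simp_all add: pcompose_mult pcompose_1)

lemma cubic_identity:
  fixes a b c W :: "'a::idom"
  assumes "1 + W + W ^ 2 = 0"
  shows "(a + b + c) * (a + W * b + W ^ 2 * c) * (a + W ^ 2 * b + W * c) = a ^ 3 + b ^ 3 + c ^ 3 - 3 * (a * b * c)"
  using assms by algebra



lemma p3_formula:
  fixes f0 f1 f2 F :: "int poly"
  assumes F: "F = pcompose f0 (monom 1 3) + monom 1 1 * pcompose f1 (monom 1 3)
                   + monom 1 2 * pcompose f2 (monom 1 3)"
  shows "(\<Prod>j<3. pcompose (map_poly of_int F) [:0, root_omega 3 1 ^ j:]) =
         pcompose (map_poly (of_int :: int \<Rightarrow> complex) (f0 ^ 3 + monom 1 1 * f1 ^ 3 + monom 1 2 * f2 ^ 3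
                   - smult 3 (monom 1 1 * f0 * f1 * f2))) (monom 1 3)"
proof -
  define w where "w = root_omega 3 1"
  have w3: "w ^ 3 = 1" using root_omega_pow_p[of 3 1] by (simp add: w_def)
  have s: "1 + w + w ^ 2 = 0"
    using sum_omega[of 3 1] by (simp add: w_def numeral_3_eq_3 power2_eq_square)
  define M where "M = (monom 1 3 :: complex poly)"
  define X where "X = (monom 1 1 :: complex poly)"
  define A where "A = pcompose (map_poly of_int f0) M"
  define B where "B = pcompose (map_poly of_int f1) M"
  define C where "C = pcompose (map_poly of_int f2) M"
  have X2: "(monom 1 2 :: complex poly) = X ^ 2" by (simp add: X_def monom_power)
  have X3: "X ^ 3 = M" by (simp add: X_def M_def monom_power)
  have X6: "X ^ 6 = M ^ 2" by (simp add: X_def M_def monom_power)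
  have ciF: "map_poly of_int F = A + X * B + X ^ 2 * C"
    unfolding F A_def B_def C_def M_def X_def
    by (simp add: ci_add ci_mult ci_pcompose ci_monom X2[unfolded X_def])
  have lin: "[:0, c:] = [:c:] * X" for c :: complex
    by (simp add: X_def monom_Suc monom_0)
  have T: "pcompose (map_poly of_int F) [:0, c:] = A + smult c (X * B) + smult (c ^ 2) (X ^ 2 * C)"
    if c3: "c ^ 3 = 1" for c :: complex
  proof -
    have Mc: "pcompose M [:0, c:] = M"
    proof -
      have "[:0, c:] = monom c 1" by (simp add: monom_Suc monom_0)
      then show ?thesis unfolding M_def pcompose_monom1 by (simp add: monom_power c3)
    qed
    have "pcompose P M \<circ>\<^sub>p [:0, c:] = pcompose P M" for P :: "complex poly"
      by (simp flip: pcompose_assoc add: Mc)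
    moreover have "pcompose X [:0, c:] = [:c:] * X"
      using lin[of c] by (simp add: X_def pcompose_monom1)
    ultimately show ?thesis
      unfolding ciF A_def B_def C_def
      by (simp add: pcompose_add pcompose_mult pcompose_power smult_power)
  qed
  have "(\<Prod>j<3. pcompose (map_poly of_int F) [:0, root_omega 3 1 ^ j:]) =
        pcompose (map_poly of_int F) [:0, 1:] * pcompose (map_poly of_int F) [:0, w:] * pcompose (map_poly of_int F) [:0, w ^ 2:]"
    by (simp add: w_def numeral_3_eq_3 power2_eq_square mult_ac)
  also have "\<dots> = (A + X * B + X ^ 2 * C) * (A + [:w:] * (X * B) + [:w:] ^ 2 * (X ^ 2 * C))
                 * (A + [:w:] ^ 2 * (X * B) + [:w:] * (X ^ 2 * C))"
  proof -
    have w6: "(w ^ 2) ^ 3 = 1"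
    proof -
      have "(w ^ 2) ^ 3 = (w ^ 3) ^ 2" by (simp flip: power_mult add: mult.commute)
      then show ?thesis using w3 by simp
    qed
    have ww: "[:w ^ 2:] ^ 2 = [:w:]"
    proof -
      have "(w ^ 2) ^ 2 = w ^ 3 * w" by (simp flip: power_mult power_Suc2)
      then show ?thesis using w3 by (simp add: poly_const_pow)
    qed
    have sm: "smult a P = [:a:] * P" for a :: complex and P
      by simp
    have w4: "(w ^ 2) ^ 2 = w"
    proof -
      have "(w ^ 2) ^ 2 = w ^ 3 * w" by (simp add: eval_nat_numeral mult_ac)
      then show ?thesis using w3 by simp
    qed
    show ?thesis
      using T[OF w3] T[OF w6] T[of 1] ciF by (simp only: sm w4 poly_const_pow power_one) simp
  qed
  also have "\<dots> = A ^ 3 + (X * B) ^ 3 + (X ^ 2 * C) ^ 3 - 3 * (A * (X * B) * (X ^ 2 * C))"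
  proof (rule cubic_identity)
    show "1 + [:w:] + [:w:] ^ 2 = 0" using s by (simp add: poly_const_pow one_pCons)
  qed
  also have "\<dots> = A ^ 3 + M * B ^ 3 + M ^ 2 * C ^ 3 - smult 3 (M * A * B * C)"
  proof -
    have e1: "(X * B) ^ 3 = M * B ^ 3" by (simp add: power_mult_distrib X3)
    have e2: "(X ^ 2 * C) ^ 3 = M ^ 2 * C ^ 3"
      by (simp add: power_mult_distrib X6 flip: power_mult)
    have e3: "A * (X * B) * (X ^ 2 * C) = M * A * B * C"
    proof -
      have "A * (X * B) * (X ^ 2 * C) = (X * X ^ 2) * A * B * C" by (simp add: mult_ac)
      also have "X * X ^ 2 = M" using X3 by (simp add: eval_nat_numeral)
      finally show ?thesis .
    qed
    show ?thesis unfolding e1 e2 e3 numeral_mult_conv_smult ..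
  qed
  also have "\<dots> = pcompose (map_poly (of_int :: int \<Rightarrow> complex) (f0 ^ 3 + monom 1 1 * f1 ^ 3 + monom 1 2 * f2 ^ 3
                   - smult 3 (monom 1 1 * f0 * f1 * f2))) (monom 1 3)"
  proof -
    have "map_poly (of_int :: int \<Rightarrow> complex) (f0 ^ 3 + monom 1 1 * f1 ^ 3 + monom 1 2 * f2 ^ 3
                   - smult 3 (monom 1 1 * f0 * f1 * f2)) =
          map_poly of_int f0 ^ 3 + monom 1 1 * map_poly of_int f1 ^ 3 + monom 1 2 * map_poly of_int f2 ^ 3
           - smult 3 (monom 1 1 * map_poly of_int f0 * map_poly of_int f1 * map_poly of_int f2)"
      by (simp only: ci_diff ci_add ci_mult ci_power ci_smult ci_monom of_int_1 of_int_numeral)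
    then show ?thesis
      unfolding A_def B_def C_def M_def
      by (simp only: pcompose_diff pcompose_add pcompose_mult pcompose_power pcompose_smult pcompose_monom1 power_one_right)
  qed
  finally show ?thesis .
qed



theorem lemma2p4:
  fixes p :: nat and F :: "int poly" and H :: "complex poly"
  assumes "prime p"
    and H_def: "H = (\<Prod>j<p. pcompose (map_poly of_int F) [:0, root_omega p 1 ^ j:])"
  shows "\<exists>g :: int poly.
           H = pcompose (map_poly of_int g) (monom 1 p)
         \<and> (\<forall>n. coeff g n mod int p = coeff F n mod int p)
         \<and> (\<forall>i\<ge>2. normN p i F = normN p (i - 1) g)
         \<and> of_int (poly F 1) * normN p 1 F = of_int (poly g 1)
         \<and> (p = 3 \<longrightarrow> (\<forall>f0 f1 f2 :: int poly.
               F = pcompose f0 (monom 1 3) + monom 1 1 * pcompose f1 (monom 1 3)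
                   + monom 1 2 * pcompose f2 (monom 1 3) \<longrightarrow>
               g = f0 ^ 3 + monom 1 1 * f1 ^ 3 + monom 1 2 * f2 ^ 3
                   - smult 3 (monom 1 1 * f0 * f1 * f2)))"
proof -
  obtain g where g1: "H = pcompose (map_poly of_int g) (monom 1 p)"
    and g2: "\<forall>n. coeff g n mod int p = coeff F n mod int p"
    using exists_g[OF assms] by blast
  have Heq: "(\<Prod>j<p. pcompose (map_poly of_int F) [:0, root_omega p 1 ^ j:]) = pcompose (map_poly of_int g) (monom 1 p)"
    using g1 H_def by simp
  have g3: "\<forall>i\<ge>2. normN p i F = normN p (i - 1) g"
    using norm_rel[OF assms(1) _ Heq] by blast
  have g4: "of_int (poly F 1) * normN p 1 F = of_int (poly g 1)"
    by (rule norm1[OF assms(1) Heq])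
  have g5: "p = 3 \<longrightarrow> (\<forall>f0 f1 f2 :: int poly.
               F = pcompose f0 (monom 1 3) + monom 1 1 * pcompose f1 (monom 1 3)
                   + monom 1 2 * pcompose f2 (monom 1 3) \<longrightarrow>
               g = f0 ^ 3 + monom 1 1 * f1 ^ 3 + monom 1 2 * f2 ^ 3
                   - smult 3 (monom 1 1 * f0 * f1 * f2))"
  proof (intro impI allI)
    fix f0 f1 f2 :: "int poly"
    assume p3: "p = 3"
      and F: "F = pcompose f0 (monom 1 3) + monom 1 1 * pcompose f1 (monom 1 3)
                   + monom 1 2 * pcompose f2 (monom 1 3)"
    have eq3: "pcompose (map_poly (of_int :: int \<Rightarrow> complex) g) (monom 1 3) =
          pcompose (map_poly (of_int :: int \<Rightarrow> complex) (f0 ^ 3 + monom 1 1 * f1 ^ 3 + monom 1 2 * f2 ^ 3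
                   - smult 3 (monom 1 1 * f0 * f1 * f2))) (monom 1 3)"
      using Heq p3_formula[OF F] unfolding p3 by simp
    show "g = f0 ^ 3 + monom 1 1 * f1 ^ 3 + monom 1 2 * f2 ^ 3
                   - smult 3 (monom 1 1 * f0 * f1 * f2)"
      by (rule pcompose_monom_inj[OF _ eq3]) simp
  qed
  show ?thesis using g1 g2 g3 g4 g5 by blast
qed

end
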